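(* Let $k\ge1$, $G=(V,E)$ an inductively $k$-independent graph with $k$-independence ordering $v_1,\dots,v_n$, $f:2^V\to\mathbb{R}_{\ge0}$ monotone submodular with $f(\emptyset)=0$, and $\beta>0$. Let $S_{\mathrm{end}}$ and $w_1,\dots,w_n$ be produced by Phase 1 of algorithm PD-MON (described in the context). Then \[ f(S_{\mathrm{end}})\le\frac{1+\beta}{\beta}\sum_{i=1}^n w_i. \]
   Context: $N(v)$ is the neighbourhood of $v$ (excluding $v$); $G$ is inductively $k$-independent with $k$-independence ordering $v_1,\dots,v_n$ if for every $i$, $G[N(v_i)\cap\{v_i,\dots,v_n\}]$ has no independent set of size more than $k$. For $S\subseteq V$, $f_S(v)=f(S\cup\{v\})-f(S)$. Phase 1 of algorithm PD-MON (parameter $\beta>0$): start with $S=\emptyset$ and $w_1=\dots=w_n=0$. For $i=1,\dots,n$: let $C_i=N(v_i)\cap S$ for the current $S$; if $f_S(v_i)>(1+\beta)\sum_{v_j\in C_i}w_j$, set $w_i=f_S(v_i)-\sum_{v_j\in C_i}w_j$ (with $S$ the set before insertion) and add $v_i$ to $S$; otherwise leave $w_i=0$. $S_{\mathrm{end}}$ is $S$ at the end of this phase. *)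

theory Defs
  imports Complex_Main
begin

definition neighbourhood :: "'a set \<Rightarrow> ('a \<Rightarrow> 'a \<Rightarrow> bool) \<Rightarrow> 'a \<Rightarrow> 'a set" where
  "neighbourhood V E v = {u \<in> V. E v u \<and> u \<noteq> v}"

definition independent_set :: "('a \<Rightarrow> 'a \<Rightarrow> bool) \<Rightarrow> 'a set \<Rightarrow> bool" where
  "independent_set E I \<longleftrightarrow> (\<forall>u\<in>I. \<forall>v\<in>I. u \<noteq> v \<longrightarrow> \<not> E u v)"

definition k_independence_ordering :: "nat \<Rightarrow> ('a \<Rightarrow> 'a \<Rightarrow> bool) \<Rightarrow> 'a list \<Rightarrow> bool" where
  "k_independence_ordering k E vs \<longleftrightarrow>
     distinct vs \<and>
     (\<forall>i < length vs. \<forall>I. I \<subseteq> neighbourhood (set vs) E (vs ! i) \<inter> set (drop i vs)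
          \<longrightarrow> independent_set E I \<longrightarrow> card I \<le> k)"

text \<open>One step of Phase 1 of PD-MON, processing vertex number i; the state is (S, w),
  with w indexed by vertex positions.\<close>
definition pdmon_step :: "('a set \<Rightarrow> real) \<Rightarrow> ('a \<Rightarrow> 'a \<Rightarrow> bool) \<Rightarrow> real \<Rightarrow> 'a list
    \<Rightarrow> 'a set \<times> (nat \<Rightarrow> real) \<Rightarrow> nat \<Rightarrow> 'a set \<times> (nat \<Rightarrow> real)" where
  "pdmon_step f E \<beta> vs st i =
     (let S = fst st; w = snd st; v = vs ! i;
          C = {j. j < length vs \<and> vs ! j \<in> neighbourhood (set vs) E v \<inter> S};
          m = f (S \<union> {v}) - f S;
          c = (\<Sum>j\<in>C. w j)
      in if m > (1 + \<beta>) * c then (S \<union> {v}, w(i := m - c)) else (S, w))"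

definition pdmon_phase1 :: "('a set \<Rightarrow> real) \<Rightarrow> ('a \<Rightarrow> 'a \<Rightarrow> bool) \<Rightarrow> real \<Rightarrow> 'a list
    \<Rightarrow> 'a set \<times> (nat \<Rightarrow> real)" where
  "pdmon_phase1 f E \<beta> vs = foldl (pdmon_step f E \<beta> vs) ({}, (\<lambda>_. 0)) [0..<length vs]"

end

theory Submission
  imports Defs
begin

lemma key_ineq:
  fixes m c \<beta> :: real
  assumes "\<beta> > 0" "m > (1 + \<beta>) * c"
  shows "m \<le> (1 + \<beta>) / \<beta> * (m - c)"
proof -
  have "\<beta> * m \<le> (1 + \<beta>) * (m - c)" using assms by (simp add: algebra_simps)
  then show ?thesis using assms(1) by (simp add: field_simps)
qed

lemma phase_inv:
  fixes f :: "'a set \<Rightarrow> real" and \<beta> :: real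
  assumes "f {} = 0" "\<beta> > 0"
  shows "f (fst (foldl (pdmon_step f E \<beta> vs) ({}, (\<lambda>_. 0)) [0..<j]))
           \<le> (1 + \<beta>) / \<beta> * (\<Sum>i<j. snd (foldl (pdmon_step f E \<beta> vs) ({}, (\<lambda>_. 0)) [0..<j]) i)
       \<and> (\<forall>i\<ge>j. snd (foldl (pdmon_step f E \<beta> vs) ({}, (\<lambda>_. 0)) [0..<j]) i = 0)"
proof (induction j)
  case 0
  then show ?case using assms by simp
next
  case (Suc j)
  obtain S w where P: "foldl (pdmon_step f E \<beta> vs) ({}, (\<lambda>_. 0)) [0..<j] = (S, w)"
    by fastforce
  define v where "v = vs ! j"
  define C where "C = {i. i < length vs \<and> vs ! i \<in> neighbourhood (set vs) E v \<inter> S}"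
  define m where "m = f (S \<union> {v}) - f S"
  define c where "c = (\<Sum>i\<in>C. w i)"
  have IH1: "f S \<le> (1 + \<beta>) / \<beta> * (\<Sum>i<j. w i)" and IH2: "\<forall>i\<ge>j. w i = 0"
    using Suc P by auto
  have st: "foldl (pdmon_step f E \<beta> vs) ({}, (\<lambda>_. 0)) [0..<Suc j]
      = (if m > (1 + \<beta>) * c then (S \<union> {v}, w(j := m - c)) else (S, w))"
    using P by (simp add: pdmon_step_def v_def C_def m_def c_def Let_def)
  show ?case
  proof (cases "m > (1 + \<beta>) * c")
    case True
    have s: "(\<Sum>i<Suc j. (w(j := m - c)) i) = (\<Sum>i<j. w i) + (m - c)"
      by simp
    have "f (S \<union> {v}) = f S + m" by (simp add: m_def)
    also have "\<dots> \<le> (1 + \<beta>) / \<beta> * (\<Sum>i<j. w i) + (1 + \<beta>) / \<beta> * (m - c)"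
      using IH1 key_ineq[OF assms(2) True] by linarith
    also have "\<dots> = (1 + \<beta>) / \<beta> * (\<Sum>i<Suc j. (w(j := m - c)) i)"
      by (simp only: s distrib_left)
    finally show ?thesis using st True IH2 by auto
  next
    case False
    have "(\<Sum>i<Suc j. w i) = (\<Sum>i<j. w i)" using IH2 by simp
    then show ?thesis using st False IH1 IH2 by auto
  qed
qed

theorem lemma4:
  fixes k :: nat and E :: "'a \<Rightarrow> 'a \<Rightarrow> bool" and vs :: "'a list"
    and f :: "'a set \<Rightarrow> real" and \<beta> :: real
  assumes "k \<ge> 1"
    and "\<And>u v. E u v \<Longrightarrow> E v u"
    and "\<And>v. \<not> E v v"
    and "k_independence_ordering k E vs"
    and "\<And>A. A \<subseteq> set vs \<Longrightarrow> f A \<ge> 0"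
    and "f {} = 0"
    and "\<And>A B. A \<subseteq> B \<Longrightarrow> B \<subseteq> set vs \<Longrightarrow> f A \<le> f B"
    and "\<And>A B. A \<subseteq> set vs \<Longrightarrow> B \<subseteq> set vs \<Longrightarrow> f (A \<union> B) + f (A \<inter> B) \<le> f A + f B"
    and "\<beta> > 0"
  shows "f (fst (pdmon_phase1 f E \<beta> vs))
           \<le> (1 + \<beta>) / \<beta> * (\<Sum>i<length vs. snd (pdmon_phase1 f E \<beta> vs) i)"
  using phase_inv[where f=f and E=E and \<beta>=\<beta> and vs=vs and j="length vs", OF assms(6) assms(9)]
  unfolding pdmon_phase1_def by blast

end
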